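(* $\mathbb A(\infty)$ is completely isomorphic to $C\otimes\mathbb A(\infty)$, where $C$ is the column Hilbert space and $\otimes$ the spatial tensor product.
   Context: $P_\infty$ is the free semigroup on countably many letters (including the empty word), $\ell_2(P_\infty)$ has orthonormal basis $\{\delta_x\}$, $L_x\delta_y=\delta_{xy}$, and $\mathbb A(\infty)$ is the norm closure of $\mathrm{span}\{L_x\}$ in $B(\ell_2(P_\infty))$. The column Hilbert space $C$ is the closed span of the matrix units $\{e_{i1}:i\in\mathbb N\}$ in $B(\ell_2)$. For operator spaces $X\subseteq B(H)$, $Y\subseteq B(L)$, $X\otimes Y$ is the closure of the algebraic tensor product in $B(H\otimes_2L)$. Completely isomorphic means related by a linear bijection which is completely bounded with completely bounded inverse. *)

theory Defs
  imports Complex_Main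
begin

text \<open>Bounded operators on the Hilbert space ell2(I) are represented by their
matrices T i j = <T delta_j, delta_i>; this representation is faithful.
A matrix is bounded iff it is bounded on finitely supported vectors.\<close>

type_synonym 'i mat = "'i \<Rightarrow> 'i \<Rightarrow> complex"

definition norm_bound :: "'i mat \<Rightarrow> real \<Rightarrow> bool" where
  "norm_bound T M \<longleftrightarrow> M \<ge> 0 \<and>
     (\<forall>S F (f::'i \<Rightarrow> complex). finite S \<longrightarrow> finite F \<longrightarrow>
        (\<Sum>i\<in>F. (cmod (\<Sum>j\<in>S. T i j * f j))\<^sup>2) \<le> M\<^sup>2 * (\<Sum>j\<in>S. (cmod (f j))\<^sup>2))"

definition bounded_mat :: "'i mat \<Rightarrow> bool" where
  "bounded_mat T \<longleftrightarrow> (\<exists>M. norm_bound T M)"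

definition opnorm :: "'i mat \<Rightarrow> real" where
  "opnorm T = Inf {M. norm_bound T M}"

definition mdiff :: "'i mat \<Rightarrow> 'i mat \<Rightarrow> 'i mat" where
  "mdiff A B = (\<lambda>i j. A i j - B i j)"

definition mspan :: "'i mat set \<Rightarrow> 'i mat set" where
  "mspan S = {T. \<exists>F c. finite F \<and> F \<subseteq> S \<and> T = (\<lambda>i j. \<Sum>m\<in>F. c m * m i j)}"

definition mclosure :: "'i mat set \<Rightarrow> 'i mat set" where
  "mclosure S = {T. bounded_mat T \<and>
     (\<exists>s. (\<forall>n. s n \<in> S) \<and> (\<lambda>n. opnorm (mdiff (s n) T)) \<longlonglongrightarrow> 0)}"

text \<open>n-th matrix amplification: an n x n matrix of operators on ell2(I),
as an operator on ell2(I x {0..<n}) (embedded in ell2(I x nat)).\<close>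
definition amp :: "nat \<Rightarrow> (nat \<Rightarrow> nat \<Rightarrow> 'i mat) \<Rightarrow> ('i \<times> nat) mat" where
  "amp n x = (\<lambda>(i,k) (j,l). if k < n \<and> l < n then x k l i j else 0)"

definition completely_bounded :: "('i mat \<Rightarrow> 'j mat) \<Rightarrow> 'i mat set \<Rightarrow> bool" where
  "completely_bounded \<phi> X \<longleftrightarrow> (\<exists>K. \<forall>n x. (\<forall>k l. k < n \<longrightarrow> l < n \<longrightarrow> x k l \<in> X) \<longrightarrow>
      opnorm (amp n (\<lambda>k l. \<phi> (x k l))) \<le> K * opnorm (amp n x))"

definition complex_linear_on :: "('i mat \<Rightarrow> 'j mat) \<Rightarrow> 'i mat set \<Rightarrow> bool" where
  "complex_linear_on \<phi> X \<longleftrightarrow> (\<forall>x\<in>X. \<forall>y\<in>X. \<forall>a b.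
      \<phi> (\<lambda>i j. a * x i j + b * y i j) = (\<lambda>i j. a * \<phi> x i j + b * \<phi> y i j))"

definition completely_isomorphic :: "'i mat set \<Rightarrow> 'j mat set \<Rightarrow> bool" where
  "completely_isomorphic X Y \<longleftrightarrow> (\<exists>\<phi>. bij_betw \<phi> X Y \<and> complex_linear_on \<phi> X \<and>
      completely_bounded \<phi> X \<and> completely_bounded (inv_into X \<phi>) Y)"

definition kron :: "'i mat \<Rightarrow> 'j mat \<Rightarrow> ('i \<times> 'j) mat" where
  "kron a b = (\<lambda>(i,i') (j,j'). a i j * b i' j')"

definition spatial_tensor :: "'i mat set \<Rightarrow> 'j mat set \<Rightarrow> ('i \<times> 'j) mat set" where
  "spatial_tensor X Y = mclosure (mspan {kron a b | a b. a \<in> X \<and> b \<in> Y})"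

text \<open>P_infinity = words (lists) over the letters nat; L_x delta_y = delta_{xy}.\<close>
definition Lop :: "nat list \<Rightarrow> nat list mat" where
  "Lop x = (\<lambda>w v. if w = x @ v then 1 else 0)"

definition A_inf :: "nat list mat set" where
  "A_inf = mclosure (mspan (range Lop))"

text \<open>Column Hilbert space: closed span of e_{i1} (first column; index 1 is 0 here).\<close>
definition unit_mat :: "nat \<Rightarrow> nat \<Rightarrow> nat mat" where
  "unit_mat a b = (\<lambda>i j. if i = a \<and> j = b then 1 else 0)"

definition column_space :: "nat mat set" where
  "column_space = mclosure (mspan {unit_mat i 0 | i. True})"

end

theory Submission
  imports Defs "HOL-Analysis.L2_Norm"
begin

lemma nb_nonneg: "norm_bound T M \<Longrightarrow> 0 \<le> M"
  by (simp add: norm_bound_def)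

lemma nbD: "norm_bound T M \<Longrightarrow> finite S \<Longrightarrow> finite F \<Longrightarrow>
   (\<Sum>i\<in>F. (cmod (\<Sum>j\<in>S. T i j * f j))\<^sup>2) \<le> M\<^sup>2 * (\<Sum>j\<in>S. (cmod (f j))\<^sup>2)"
  by (simp add: norm_bound_def)

lemma nbI: "0 \<le> M \<Longrightarrow> (\<And>S F f. finite S \<Longrightarrow> finite F \<Longrightarrow>
   (\<Sum>i\<in>F. (cmod (\<Sum>j\<in>S. T i j * f j))\<^sup>2) \<le> M\<^sup>2 * (\<Sum>j\<in>S. (cmod (f j))\<^sup>2)) \<Longrightarrow> norm_bound T M"
  by (simp add: norm_bound_def)

lemma nb_mono: "norm_bound (T::'i mat) M \<Longrightarrow> M \<le> M' \<Longrightarrow> norm_bound T M'"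
proof (rule nbI)
  assume a: "norm_bound T M" "M \<le> M'"
  then show "0 \<le> M'" using nb_nonneg by fastforce
  fix S F :: "'i set" and f :: "'i \<Rightarrow> complex" assume "finite S" "finite F"
  then have "(\<Sum>i\<in>F. (cmod (\<Sum>j\<in>S. T i j * f j))\<^sup>2) \<le> M\<^sup>2 * (\<Sum>j\<in>S. (cmod (f j))\<^sup>2)"
    using a nbD by blast
  also have "\<dots> \<le> M'\<^sup>2 * (\<Sum>j\<in>S. (cmod (f j))\<^sup>2)"
    apply (rule mult_right_mono)
    using a nb_nonneg[OF a(1)] by (auto intro!: power_mono sum_nonneg)
  finally show "(\<Sum>i\<in>F. (cmod (\<Sum>j\<in>S. T i j * f j))\<^sup>2) \<le> M'\<^sup>2 * (\<Sum>j\<in>S. (cmod (f j))\<^sup>2)" .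
qed

lemma opnorm_le: "norm_bound T M \<Longrightarrow> opnorm T \<le> M"
  unfolding opnorm_def
  by (rule cInf_lower) (auto intro: bdd_belowI[where m=0] nb_nonneg)

lemma opnorm_nonneg: "bounded_mat T \<Longrightarrow> 0 \<le> opnorm T"
  unfolding opnorm_def bounded_mat_def
  by (rule cInf_greatest) (auto intro: nb_nonneg)

lemma opnorm_nb: assumes "bounded_mat (T::'i mat)" shows "norm_bound T (opnorm T)"
proof (rule nbI)
  show "0 \<le> opnorm T" using assms opnorm_nonneg by blast
  fix S F :: "'i set" and f :: "'i \<Rightarrow> complex" assume fin: "finite S" "finite F"
  define L where "L = (\<Sum>i\<in>F. (cmod (\<Sum>j\<in>S. T i j * f j))\<^sup>2)"
  define R where "R = (\<Sum>j\<in>S. (cmod (f j))\<^sup>2)"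
  have R0: "0 \<le> R" unfolding R_def by (auto intro: sum_nonneg)
  have all: "L \<le> M\<^sup>2 * R" if "norm_bound T M" for M
    using nbD[OF that fin] unfolding L_def R_def by blast
  show "L \<le> (opnorm T)\<^sup>2 * R"
  proof (rule ccontr)
    assume "\<not> L \<le> (opnorm T)\<^sup>2 * R"
    then have lt: "(opnorm T)\<^sup>2 * R < L" by simp
    have Rp: "R > 0"
    proof (rule ccontr)
      assume "\<not> R > 0" then have "R = 0" using R0 by simp
      obtain M where "norm_bound T M" using assms bounded_mat_def by blast
      then have "L \<le> 0" using all[of M] \<open>R = 0\<close> by simp
      then show False using lt \<open>R = 0\<close> by simp
    qed
    have on: "0 \<le> opnorm T" using assms opnorm_nonneg by blast
    have "opnorm T < sqrt (L / R)"
    proof -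
      have "(opnorm T)\<^sup>2 < L / R" using lt Rp by (simp add: field_simps)
      then show ?thesis using on real_less_rsqrt by blast
    qed
    then have "Inf {M. norm_bound T M} < sqrt (L / R)" unfolding opnorm_def .
    then obtain M where M: "norm_bound T M" "M < sqrt (L / R)"
      using assms unfolding bounded_mat_def
      by (metis (mono_tags, lifting) cInf_lessD empty_iff mem_Collect_eq)
    have M0: "0 \<le> M" using M nb_nonneg by blast
    have "M\<^sup>2 < L / R"
      using M(2) M0 by (metis real_sqrt_less_iff real_sqrt_pow2_iff real_sqrt_power abs_of_nonneg
          Rp lt on order.strict_trans1 divide_nonneg_pos less_eq_real_def power2_less_imp_less
          real_sqrt_abs real_sqrt_le_iff sqrt_le_D sum_power2_ge_zero zero_le_power2)
    then have "M\<^sup>2 * R < L" using Rp by (simp add: field_simps)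
    then show False using all[OF M(1)] by simp
  qed
qed

lemma nb_add:
  assumes a: "norm_bound (A::'i mat) M1" and b: "norm_bound B M2"
  shows "norm_bound (\<lambda>i j. A i j + B i j) (M1 + M2)"
proof (rule nbI)
  show "0 \<le> M1 + M2" using a b nb_nonneg by (metis add_nonneg_nonneg)
  fix S F :: "'i set" and f :: "'i \<Rightarrow> complex" assume fin: "finite S" "finite F"
  define R where "R = (\<Sum>j\<in>S. (cmod (f j))\<^sup>2)"
  define u where "u i = cmod (\<Sum>j\<in>S. A i j * f j)" for i
  define v where "v i = cmod (\<Sum>j\<in>S. B i j * f j)" for i
  have R0: "0 \<le> R" unfolding R_def by (auto intro: sum_nonneg)
  have m1: "0 \<le> M1" "0 \<le> M2" using a b nb_nonneg by blast+
  have "L2_set u F \<le> M1 * sqrt R"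
  proof -
    have "L2_set u F = sqrt (\<Sum>i\<in>F. (u i)\<^sup>2)" by (simp add: L2_set_def)
    also have "\<dots> \<le> sqrt (M1\<^sup>2 * R)" unfolding u_def R_def using nbD[OF a fin] by simp
    also have "\<dots> = M1 * sqrt R" using m1 by (simp add: real_sqrt_mult)
    finally show ?thesis .
  qed
  moreover have "L2_set v F \<le> M2 * sqrt R"
  proof -
    have "L2_set v F = sqrt (\<Sum>i\<in>F. (v i)\<^sup>2)" by (simp add: L2_set_def)
    also have "\<dots> \<le> sqrt (M2\<^sup>2 * R)" unfolding v_def R_def using nbD[OF b fin] by simp
    also have "\<dots> = M2 * sqrt R" using m1 by (simp add: real_sqrt_mult)
    finally show ?thesis .
  qed
  moreover have "L2_set (\<lambda>i. cmod (\<Sum>j\<in>S. (A i j + B i j) * f j)) F \<le> L2_set (\<lambda>i. u i + v i) F"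
  proof (rule L2_set_mono)
    fix i
    have "(\<Sum>j\<in>S. (A i j + B i j) * f j) = (\<Sum>j\<in>S. A i j * f j) + (\<Sum>j\<in>S. B i j * f j)"
      by (simp add: distrib_right sum.distrib)
    then show "cmod (\<Sum>j\<in>S. (A i j + B i j) * f j) \<le> u i + v i"
      unfolding u_def v_def by (metis norm_triangle_ineq)
  qed simp
  moreover have "L2_set (\<lambda>i. u i + v i) F \<le> L2_set u F + L2_set v F" by (rule L2_set_triangle_ineq)
  ultimately have le: "L2_set (\<lambda>i. cmod (\<Sum>j\<in>S. (A i j + B i j) * f j)) F \<le> (M1 + M2) * sqrt R"
    by (simp add: distrib_right)
  have "(\<Sum>i\<in>F. (cmod (\<Sum>j\<in>S. (A i j + B i j) * f j))\<^sup>2)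
      = (L2_set (\<lambda>i. cmod (\<Sum>j\<in>S. (A i j + B i j) * f j)) F)\<^sup>2"
    by (simp add: L2_set_def sum_nonneg)
  also have "\<dots> \<le> ((M1 + M2) * sqrt R)\<^sup>2"
    by (rule power_mono[OF le L2_set_nonneg])
  also have "\<dots> = (M1 + M2)\<^sup>2 * R" using R0 by (simp add: power_mult_distrib)
  finally show "(\<Sum>i\<in>F. (cmod (\<Sum>j\<in>S. (A i j + B i j) * f j))\<^sup>2) \<le> (M1 + M2)\<^sup>2 * (\<Sum>j\<in>S. (cmod (f j))\<^sup>2)"
    unfolding R_def .
qed

lemma nb_zero: "norm_bound (\<lambda>i j. 0) 0"
  by (rule nbI) auto

lemma opnorm_zero: "opnorm (\<lambda>i j. 0) = 0"
  using opnorm_le[OF nb_zero] opnorm_nonneg[of "\<lambda>i j. 0"] bounded_mat_def nb_zero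
  by (metis antisym)


lemma nb_scale:
  assumes a: "norm_bound (A::'i mat) M"
  shows "norm_bound (\<lambda>i j. c * A i j) (cmod c * M)"
proof (rule nbI)
  show "0 \<le> cmod c * M" using nb_nonneg[OF a] by simp
  fix S F :: "'i set" and f :: "'i \<Rightarrow> complex" assume fin: "finite S" "finite F"
  have eq: "(cmod (\<Sum>j\<in>S. c * A i j * f j))\<^sup>2 = (cmod c)\<^sup>2 * (cmod (\<Sum>j\<in>S. A i j * f j))\<^sup>2" for i
  proof -
    have "(\<Sum>j\<in>S. c * A i j * f j) = c * (\<Sum>j\<in>S. A i j * f j)"
      by (simp add: sum_distrib_left mult.assoc)
    then show ?thesis by (simp add: norm_mult power_mult_distrib)
  qed
  have "(\<Sum>i\<in>F. (cmod (\<Sum>j\<in>S. c * A i j * f j))\<^sup>2) = (cmod c)\<^sup>2 * (\<Sum>i\<in>F. (cmod (\<Sum>j\<in>S. A i j * f j))\<^sup>2)"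
    unfolding eq by (simp add: sum_distrib_left)
  also have "\<dots> \<le> (cmod c)\<^sup>2 * (M\<^sup>2 * (\<Sum>j\<in>S. (cmod (f j))\<^sup>2))"
    using nbD[OF a fin] by (simp add: mult_left_mono)
  finally show "(\<Sum>i\<in>F. (cmod (\<Sum>j\<in>S. c * A i j * f j))\<^sup>2) \<le> (cmod c * M)\<^sup>2 * (\<Sum>j\<in>S. (cmod (f j))\<^sup>2)"
    by (simp add: power_mult_distrib)
qed

lemma nb_entry:
  assumes a: "norm_bound (A::'i mat) M" shows "cmod (A i j) \<le> M"
proof -
  have "(\<Sum>i'\<in>{i}. (cmod (\<Sum>j'\<in>{j}. A i' j' * 1))\<^sup>2) \<le> M\<^sup>2 * (\<Sum>j'\<in>{j}. (cmod (1::complex))\<^sup>2)"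
    by (rule nbD[OF a]) auto
  then have "(cmod (A i j))\<^sup>2 \<le> M\<^sup>2" by simp
  then show ?thesis using nb_nonneg[OF a] power2_le_imp_le by blast
qed

definition reidx :: "('p \<Rightarrow> bool) \<Rightarrow> ('p \<Rightarrow> bool) \<Rightarrow> ('p \<Rightarrow> 'i) \<Rightarrow> ('p \<Rightarrow> 'i) \<Rightarrow> 'i mat \<Rightarrow> 'p mat" where
  "reidx Dp Dq \<sigma> \<tau> T = (\<lambda>p q. if Dp p \<and> Dq q then T (\<sigma> p) (\<tau> q) else 0)"

definition ampl :: "'i mat \<Rightarrow> ('i \<times> 'k) mat" where
  "ampl T = (\<lambda>(i,k) (j,l). if k = l then T i j else 0)"

lemma nb_reidx:
  fixes T :: "'i mat" and Dp Dq :: "'p \<Rightarrow> bool"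
  assumes isg: "inj_on \<sigma> {p. Dp p}" and it: "inj_on \<tau> {q. Dq q}" and a: "norm_bound T M"
  shows "norm_bound (reidx Dp Dq \<sigma> \<tau> T) M"
proof (rule nbI)
  show "0 \<le> M" using nb_nonneg[OF a] .
  fix S F :: "'p set" and f :: "'p \<Rightarrow> complex" assume fin: "finite S" "finite F"
  define S' where "S' = S \<inter> {q. Dq q}"
  define F' where "F' = F \<inter> {p. Dp p}"
  define g where "g j = f (inv_into S' \<tau> j)" for j
  have itS: "inj_on \<tau> S'" using it unfolding S'_def by (rule inj_on_subset) auto
  have isF: "inj_on \<sigma> F'" using isg unfolding F'_def by (rule inj_on_subset) auto
  have finS': "finite S'" "finite F'" using fin unfolding S'_def F'_def by auto
  have inner: "(\<Sum>q\<in>S. reidx Dp Dq \<sigma> \<tau> T p q * f q) = (\<Sum>j\<in>\<tau> ` S'. T (\<sigma> p) j * g j)" if "Dp p" for p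
  proof -
    have "(\<Sum>q\<in>S. reidx Dp Dq \<sigma> \<tau> T p q * f q) = (\<Sum>q\<in>S'. T (\<sigma> p) (\<tau> q) * f q)"
      unfolding S'_def reidx_def using that fin
      by (auto simp: sum.inter_restrict intro!: sum.cong)
    also have "\<dots> = (\<Sum>q\<in>S'. T (\<sigma> p) (\<tau> q) * g (\<tau> q))"
      unfolding g_def using itS by (intro sum.cong) (auto simp: inv_into_f_f)
    also have "\<dots> = (\<Sum>j\<in>\<tau> ` S'. T (\<sigma> p) j * g j)"
      using itS by (simp add: sum.reindex)
    finally show ?thesis .
  qed
  have "(\<Sum>p\<in>F. (cmod (\<Sum>q\<in>S. reidx Dp Dq \<sigma> \<tau> T p q * f q))\<^sup>2)
      = (\<Sum>p\<in>F'. (cmod (\<Sum>q\<in>S. reidx Dp Dq \<sigma> \<tau> T p q * f q))\<^sup>2)"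
    unfolding F'_def using fin by (intro sum.mono_neutral_right) (auto simp: reidx_def)
  also have "\<dots> = (\<Sum>p\<in>F'. (cmod (\<Sum>j\<in>\<tau> ` S'. T (\<sigma> p) j * g j))\<^sup>2)"
    using inner unfolding F'_def by simp
  also have "\<dots> = (\<Sum>i\<in>\<sigma> ` F'. (cmod (\<Sum>j\<in>\<tau> ` S'. T i j * g j))\<^sup>2)"
    using isF by (simp add: sum.reindex)
  also have "\<dots> \<le> M\<^sup>2 * (\<Sum>j\<in>\<tau> ` S'. (cmod (g j))\<^sup>2)"
    using finS' by (intro nbD[OF a]) auto
  also have "(\<Sum>j\<in>\<tau> ` S'. (cmod (g j))\<^sup>2) = (\<Sum>q\<in>S'. (cmod (f q))\<^sup>2)"
    using itS by (simp add: sum.reindex g_def inv_into_f_f)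
  also have "(\<Sum>q\<in>S'. (cmod (f q))\<^sup>2) \<le> (\<Sum>q\<in>S. (cmod (f q))\<^sup>2)"
    unfolding S'_def using fin by (intro sum_mono2) auto
  finally show "(\<Sum>p\<in>F. (cmod (\<Sum>q\<in>S. reidx Dp Dq \<sigma> \<tau> T p q * f q))\<^sup>2) \<le> M\<^sup>2 * (\<Sum>q\<in>S. (cmod (f q))\<^sup>2)"
    by (simp add: mult_left_mono)
qed

lemma sum_slice:
  fixes S :: "('a \<times> 'b) set"
  assumes "finite S"
  shows "(\<Sum>y\<in>S. if snd y = k then G (fst y) else 0) = (\<Sum>j\<in>fst ` S. if (j,k) \<in> S then G j else (0::'c::comm_monoid_add))"
proof -
  have "(\<Sum>j\<in>fst ` S. if (j,k) \<in> S then G j else 0) = (\<Sum>j\<in>{j\<in>fst ` S. (j,k) \<in> S}. G j)"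
    using assms by (simp add: sum.inter_filter)
  also have "\<dots> = (\<Sum>y\<in>(\<lambda>j. (j,k)) ` {j\<in>fst ` S. (j,k) \<in> S}. G (fst y))"
    by (subst sum.reindex) (auto simp: inj_on_def)
  also have "(\<lambda>j. (j,k)) ` {j\<in>fst ` S. (j,k) \<in> S} = {y\<in>S. snd y = k}"
    by (auto simp: image_iff) (metis fst_conv prod.collapse)
  also have "(\<Sum>y\<in>{y\<in>S. snd y = k}. G (fst y)) = (\<Sum>y\<in>S. if snd y = k then G (fst y) else 0)"
    using assms by (simp add: sum.inter_filter)
  finally show ?thesis by simp
qed

lemma nb_ampl:
  fixes T :: "'i mat"
  assumes a: "norm_bound T M"
  shows "norm_bound (ampl T :: ('i \<times> 'k) mat) M"
proof (rule nbI)
  show "0 \<le> M" using nb_nonneg[OF a] .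
  fix S F :: "('i \<times> 'k) set" and f :: "'i \<times> 'k \<Rightarrow> complex" assume fin: "finite S" "finite F"
  define J where "J = fst ` S"
  define I where "I = fst ` F"
  define K where "K = snd ` F"
  define g where "g k j = (if (j,k) \<in> S then f (j,k) else 0)" for k j
  have finJ: "finite J" "finite I" "finite K" using fin unfolding J_def I_def K_def by auto
  have inner: "(\<Sum>y\<in>S. ampl T (i,k) y * f y) = (\<Sum>j\<in>J. T i j * g k j)" for i k
  proof -
    have "(\<Sum>y\<in>S. ampl T (i,k) y * f y) = (\<Sum>y\<in>S. if snd y = k then T i (fst y) * f (fst y, k) else 0)"
      by (intro sum.cong) (auto simp: ampl_def split: prod.splits)
    also have "\<dots> = (\<Sum>j\<in>J. if (j,k) \<in> S then T i j * f (j, k) else 0)"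
      unfolding J_def by (rule sum_slice[OF fin(1)])
    also have "\<dots> = (\<Sum>j\<in>J. T i j * g k j)"
      unfolding g_def by (intro sum.cong) auto
    finally show ?thesis .
  qed
  have "(\<Sum>x\<in>F. (cmod (\<Sum>y\<in>S. ampl T x y * f y))\<^sup>2) = (\<Sum>(i,k)\<in>F. (cmod (\<Sum>j\<in>J. T i j * g k j))\<^sup>2)"
    using inner by (intro sum.cong) auto
  also have "\<dots> \<le> (\<Sum>(i,k)\<in>I \<times> K. (cmod (\<Sum>j\<in>J. T i j * g k j))\<^sup>2)"
  proof (rule sum_mono2)
    show "F \<subseteq> I \<times> K" unfolding I_def K_def by (auto simp: mem_Times_iff intro: rev_image_eqI)
  qed (use finJ in auto)
  also have "\<dots> = (\<Sum>i\<in>I. \<Sum>k\<in>K. (cmod (\<Sum>j\<in>J. T i j * g k j))\<^sup>2)"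
    by (simp add: sum.cartesian_product)
  also have "\<dots> = (\<Sum>k\<in>K. \<Sum>i\<in>I. (cmod (\<Sum>j\<in>J. T i j * g k j))\<^sup>2)"
    by (rule sum.swap)
  also have "\<dots> \<le> (\<Sum>k\<in>K. M\<^sup>2 * (\<Sum>j\<in>J. (cmod (g k j))\<^sup>2))"
    using finJ by (intro sum_mono nbD[OF a]) auto
  also have "\<dots> = M\<^sup>2 * (\<Sum>k\<in>K. \<Sum>j\<in>J. (cmod (g k j))\<^sup>2)"
    by (simp add: sum_distrib_left)
  also have "(\<Sum>k\<in>K. \<Sum>j\<in>J. (cmod (g k j))\<^sup>2) = (\<Sum>j\<in>J. \<Sum>k\<in>K. (cmod (g k j))\<^sup>2)"
    by (rule sum.swap)
  also have "\<dots> = (\<Sum>(j,k)\<in>J \<times> K. (cmod (g k j))\<^sup>2)"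
    by (simp add: sum.cartesian_product)
  also have "\<dots> = (\<Sum>y\<in>J \<times> K. if y \<in> S then (cmod (f y))\<^sup>2 else 0)"
    by (intro sum.cong) (auto simp: g_def)
  also have "\<dots> = (\<Sum>y\<in>(J \<times> K) \<inter> S. (cmod (f y))\<^sup>2)"
    by (rule sum.inter_restrict[symmetric]) (use finJ in auto)
  also have "\<dots> \<le> (\<Sum>y\<in>S. (cmod (f y))\<^sup>2)"
    using fin by (intro sum_mono2) auto
  finally show "(\<Sum>x\<in>F. (cmod (\<Sum>y\<in>S. ampl T x y * f y))\<^sup>2) \<le> M\<^sup>2 * (\<Sum>y\<in>S. (cmod (f y))\<^sup>2)"
    by (simp add: mult_left_mono)
qed

definition mlinear :: "('i mat \<Rightarrow> 'j mat) \<Rightarrow> bool" where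
  "mlinear \<Theta> \<longleftrightarrow> (\<forall>x y a b. \<Theta> (\<lambda>i j. a * x i j + b * y i j) = (\<lambda>i j. a * \<Theta> x i j + b * \<Theta> y i j))"

lemma bounded_add: "bounded_mat (A::'i mat) \<Longrightarrow> bounded_mat B \<Longrightarrow> bounded_mat (\<lambda>i j. A i j + B i j)"
  unfolding bounded_mat_def using nb_add by blast

lemma bounded_scale: "bounded_mat (A::'i mat) \<Longrightarrow> bounded_mat (\<lambda>i j. c * A i j)"
  unfolding bounded_mat_def using nb_scale by blast

lemma bounded_lin: "bounded_mat (A::'i mat) \<Longrightarrow> bounded_mat B \<Longrightarrow> bounded_mat (\<lambda>i j. a * A i j + b * B i j)"
  using bounded_add[OF bounded_scale bounded_scale] by blast

lemma bounded_zero: "bounded_mat (\<lambda>i j. 0)"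
  unfolding bounded_mat_def using nb_zero by blast

lemma bounded_sum:
  assumes "finite F" "\<forall>m\<in>F. bounded_mat (G m :: 'i mat)"
  shows "bounded_mat (\<lambda>i j. \<Sum>m\<in>F. G m i j)"
  using assms
proof (induction F rule: finite_induct)
  case empty then show ?case by (simp add: bounded_zero)
next
  case (insert x F) then show ?case by (simp add: bounded_add)
qed

lemma mspan_bounded:
  assumes "S \<subseteq> Collect bounded_mat" "T \<in> mspan S"
  shows "bounded_mat (T::'i mat)"
proof -
  obtain F c where F: "finite F" "F \<subseteq> S" "T = (\<lambda>i j. \<Sum>m\<in>F. c m * m i j)"
    using assms(2) unfolding mspan_def by blast
  show ?thesis unfolding F(3) using F assms(1)
    by (intro bounded_sum) (auto intro!: bounded_scale)
qed

lemma mspan_mem: "m \<in> S \<Longrightarrow> m \<in> mspan S"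
  unfolding mspan_def by (rule CollectI, rule exI[where x="{m}"], rule exI[where x="\<lambda>_. 1"]) auto

lemma mspan_zero: "(\<lambda>i j. 0) \<in> mspan S"
  unfolding mspan_def by (rule CollectI, rule exI[where x="{}"]) auto

lemma mspan_lin:
  assumes "x \<in> mspan S" "y \<in> mspan S"
  shows "(\<lambda>i j. a * x i j + b * y i j) \<in> mspan S"
proof -
  obtain F c where F: "finite F" "F \<subseteq> S" "x = (\<lambda>i j. \<Sum>m\<in>F. c m * m i j)"
    using assms(1) unfolding mspan_def by blast
  obtain G d where G: "finite G" "G \<subseteq> S" "y = (\<lambda>i j. \<Sum>m\<in>G. d m * m i j)"
    using assms(2) unfolding mspan_def by blast
  define e where "e m = a * (if m \<in> F then c m else 0) + b * (if m \<in> G then d m else 0)" for m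
  have "(\<lambda>i j. a * x i j + b * y i j) = (\<lambda>i j. \<Sum>m\<in>F \<union> G. e m * m i j)"
  proof (intro ext)
    fix i j
    have 1: "(\<Sum>m\<in>F \<union> G. (if m \<in> F then c m else 0) * m i j) = (\<Sum>m\<in>F. c m * m i j)"
      using F G by (intro sum.mono_neutral_cong_right) auto
    have 2: "(\<Sum>m\<in>F \<union> G. (if m \<in> G then d m else 0) * m i j) = (\<Sum>m\<in>G. d m * m i j)"
      using F G by (intro sum.mono_neutral_cong_right) auto
    show "a * x i j + b * y i j = (\<Sum>m\<in>F \<union> G. e m * m i j)"
      unfolding F(3) G(3) e_def 1[symmetric] 2[symmetric]
      by (simp add: sum_distrib_left sum.distrib distrib_right mult.assoc)
  qed
  then show ?thesis unfolding mspan_def using F G by blast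
qed

lemma mdiff_bounded: "bounded_mat A \<Longrightarrow> bounded_mat B \<Longrightarrow> bounded_mat (mdiff A B)"
  unfolding mdiff_def using bounded_lin[of A B 1 "-1"] by simp

lemma opnorm_triangle:
  assumes "bounded_mat (mdiff A B)" "bounded_mat (mdiff B C)"
  shows "opnorm (mdiff A C) \<le> opnorm (mdiff A B) + opnorm (mdiff B C)"
proof -
  have "mdiff A C = (\<lambda>i j. mdiff A B i j + mdiff B C i j)" unfolding mdiff_def by auto
  then show ?thesis using nb_add[OF opnorm_nb[OF assms(1)] opnorm_nb[OF assms(2)]] opnorm_le by metis
qed

lemma opnorm_lin:
  assumes "bounded_mat A" "bounded_mat B"
  shows "opnorm (\<lambda>i j. a * A i j + b * B i j) \<le> cmod a * opnorm A + cmod b * opnorm B"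
  by (rule opnorm_le, rule nb_add, (rule nb_scale, rule opnorm_nb, rule assms)+)

lemma mclosure_mem: "X \<subseteq> Collect bounded_mat \<Longrightarrow> T \<in> X \<Longrightarrow> T \<in> mclosure X"
proof -
  assume a: "X \<subseteq> Collect bounded_mat" "T \<in> X"
  have "mdiff T T = (\<lambda>i j. 0)" unfolding mdiff_def by simp
  then have lim: "(\<lambda>n. opnorm (mdiff ((\<lambda>_. T) n) T)) \<longlonglongrightarrow> 0" by (simp add: opnorm_zero)
  have "bounded_mat T" using a by blast
  then show ?thesis unfolding mclosure_def using a lim
    by (intro CollectI conjI exI[where x="\<lambda>_. T"]) auto
qed

lemma mclosure_closed:
  assumes Xb: "X \<subseteq> Collect bounded_mat" and Tb: "bounded_mat T"
    and s: "\<forall>n. s n \<in> mclosure X" and lim: "(\<lambda>n. opnorm (mdiff (s n) T)) \<longlonglongrightarrow> 0"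
  shows "T \<in> mclosure X"
proof -
  have ex: "\<forall>n. \<exists>r. r \<in> X \<and> opnorm (mdiff r (s n)) < inverse (real (Suc n))"
  proof
  fix n
  show "\<exists>r. r \<in> X \<and> opnorm (mdiff r (s n)) < inverse (real (Suc n))"
  proof -
    have "s n \<in> mclosure X" using s by simp
    then obtain q where q: "\<forall>m. q m \<in> X" "(\<lambda>m. opnorm (mdiff (q m) (s n))) \<longlonglongrightarrow> 0"
      unfolding mclosure_def by auto
    have "inverse (real (Suc n)) > 0" by simp
    then have "eventually (\<lambda>m. opnorm (mdiff (q m) (s n)) < inverse (real (Suc n))) sequentially"
      by (rule order_tendstoD(2)[OF q(2)])
    then obtain N where N: "\<forall>m\<ge>N. opnorm (mdiff (q m) (s n)) < inverse (real (Suc n))"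
      by (auto simp: eventually_sequentially)
    show ?thesis
      by (rule exI[where x="q N"]) (use q(1) N in simp)
  qed
  qed
  obtain r where r0: "\<forall>n. r n \<in> X \<and> opnorm (mdiff (r n) (s n)) < inverse (real (Suc n))"
    using choice[OF ex] by blast
  then have r: "\<And>n. r n \<in> X" "\<And>n. opnorm (mdiff (r n) (s n)) < inverse (real (Suc n))" by auto
  have sb: "bounded_mat (s n)" for n using s by (simp add: mclosure_def)
  have rb: "bounded_mat (r n)" for n using r(1) Xb by blast
  have le: "opnorm (mdiff (r n) T) \<le> inverse (real (Suc n)) + opnorm (mdiff (s n) T)" for n
  proof -
    have "opnorm (mdiff (r n) T) \<le> opnorm (mdiff (r n) (s n)) + opnorm (mdiff (s n) T)"
      by (rule opnorm_triangle) (auto intro: mdiff_bounded sb rb Tb)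
    then show ?thesis using r(2)[of n] by linarith
  qed
  have ge: "0 \<le> opnorm (mdiff (r n) T)" for n
    by (rule opnorm_nonneg, rule mdiff_bounded[OF rb Tb])
  have "(\<lambda>n. inverse (real (Suc n)) + opnorm (mdiff (s n) T)) \<longlonglongrightarrow> 0 + 0"
    by (intro tendsto_add lim LIMSEQ_inverse_real_of_nat)
  then have h: "(\<lambda>n. inverse (real (Suc n)) + opnorm (mdiff (s n) T)) \<longlonglongrightarrow> 0" by simp
  have lim2: "(\<lambda>n. opnorm (mdiff (r n) T)) \<longlonglongrightarrow> 0"
    by (rule tendsto_sandwich[OF always_eventually always_eventually tendsto_const h])
       (intro allI ge le)+
  have "\<forall>n. r n \<in> X" using r(1) by simp
  then show ?thesis unfolding mclosure_def using Tb lim2 by blast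
qed

lemma mclosureE:
  assumes "T \<in> mclosure X"
  obtains s where "\<forall>n. s n \<in> X" "(\<lambda>n. opnorm (mdiff (s n) T)) \<longlonglongrightarrow> 0"
  using assms unfolding mclosure_def by auto

lemma mclosureI:
  assumes "bounded_mat T" "\<forall>n. s n \<in> X" "(\<lambda>n. opnorm (mdiff (s n) T)) \<longlonglongrightarrow> 0"
  shows "T \<in> mclosure X"
  using assms unfolding mclosure_def by auto

lemma mclosure_bounded: "T \<in> mclosure X \<Longrightarrow> bounded_mat T"
  unfolding mclosure_def by blast

lemma mclosure_lin:
  assumes Sb: "S \<subseteq> Collect bounded_mat" and x: "x \<in> mclosure (mspan S)" and y: "y \<in> mclosure (mspan S)"
  shows "(\<lambda>i j. a * x i j + b * y i j) \<in> mclosure (mspan S)"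
proof -
  obtain s where s: "\<forall>n. s n \<in> mspan S" "(\<lambda>n. opnorm (mdiff (s n) x)) \<longlonglongrightarrow> 0"
    using x by (rule mclosureE)
  obtain r where r: "\<forall>n. r n \<in> mspan S" "(\<lambda>n. opnorm (mdiff (r n) y)) \<longlonglongrightarrow> 0"
    using y by (rule mclosureE)
  have xb: "bounded_mat x" and yb: "bounded_mat y" using x y mclosure_bounded by blast+
  have sb: "bounded_mat (s n)" "bounded_mat (r n)" for n using s r mspan_bounded[OF Sb] by blast+
  define z where "z n = (\<lambda>i j. a * s n i j + b * r n i j)" for n
  have eq: "mdiff (z n) (\<lambda>i j. a * x i j + b * y i j) = (\<lambda>i j. a * mdiff (s n) x i j + b * mdiff (r n) y i j)" for n
    unfolding z_def mdiff_def by (auto simp: algebra_simps)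
  have le: "opnorm (mdiff (z n) (\<lambda>i j. a * x i j + b * y i j)) \<le> cmod a * opnorm (mdiff (s n) x) + cmod b * opnorm (mdiff (r n) y)" for n
    unfolding eq by (rule opnorm_lin) (auto intro: mdiff_bounded sb xb yb)
  have ge: "0 \<le> opnorm (mdiff (z n) (\<lambda>i j. a * x i j + b * y i j))" for n
    unfolding eq by (rule opnorm_nonneg, rule bounded_lin) (auto intro: mdiff_bounded sb xb yb)
  have "(\<lambda>n. cmod a * opnorm (mdiff (s n) x) + cmod b * opnorm (mdiff (r n) y)) \<longlonglongrightarrow> cmod a * 0 + cmod b * 0"
    by (intro tendsto_add tendsto_mult tendsto_const s(2) r(2))
  then have h: "(\<lambda>n. cmod a * opnorm (mdiff (s n) x) + cmod b * opnorm (mdiff (r n) y)) \<longlonglongrightarrow> 0" by simp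
  have "(\<lambda>n. opnorm (mdiff (z n) (\<lambda>i j. a * x i j + b * y i j))) \<longlonglongrightarrow> 0"
    by (rule tendsto_sandwich[OF always_eventually always_eventually tendsto_const h])
       (intro allI ge le)+
  moreover have "z n \<in> mspan S" for n unfolding z_def using s r by (intro mspan_lin) auto
  moreover have "bounded_mat (\<lambda>i j. a * x i j + b * y i j)" using xb yb by (rule bounded_lin)
  ultimately show ?thesis by (intro mclosureI) auto
qed

lemma mclosure_zero: "S \<subseteq> Collect bounded_mat \<Longrightarrow> (\<lambda>i j. 0) \<in> mclosure (mspan S)"
  by (rule mclosure_mem) (auto intro: mspan_bounded mspan_zero)

lemma mclosure_span_mem: "S \<subseteq> Collect bounded_mat \<Longrightarrow> m \<in> S \<Longrightarrow> m \<in> mclosure (mspan S)"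
  by (rule mclosure_mem) (auto intro: mspan_bounded mspan_mem)

lemma mclosure_sum:
  assumes Sb: "S \<subseteq> Collect bounded_mat" and "finite F" "\<forall>m\<in>F. G m \<in> mclosure (mspan S)"
  shows "(\<lambda>i j. \<Sum>m\<in>F. c m * G m i j) \<in> mclosure (mspan S)"
  using assms(2,3)
proof (induction F rule: finite_induct)
  case empty then show ?case using mclosure_zero[OF Sb] by simp
next
  case (insert x F)
  have "(\<lambda>i j. c x * G x i j + 1 * (\<Sum>m\<in>F. c m * G m i j)) \<in> mclosure (mspan S)"
    using insert by (intro mclosure_lin[OF Sb]) auto
  then show ?case using insert by simp
qed

lemma mlinearD: "mlinear \<Theta> \<Longrightarrow> \<Theta> (\<lambda>i j. a * x i j + b * y i j) = (\<lambda>i j. a * \<Theta> x i j + b * \<Theta> y i j)"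
  unfolding mlinear_def by blast

lemma mlinear_sum:
  assumes lin: "mlinear \<Theta>" and "finite F"
  shows "\<Theta> (\<lambda>i j. \<Sum>m\<in>F. c m * m i j) = (\<lambda>i j. \<Sum>m\<in>F. c m * \<Theta> m i j)"
  using assms(2)
proof (induction F rule: finite_induct)
  case empty
  have "\<Theta> (\<lambda>i j. 0 * (\<lambda>i j. 0) i j + 0 * (\<lambda>i j. 0) i j) = (\<lambda>i j. 0 * \<Theta> (\<lambda>i j. 0) i j + 0 * \<Theta> (\<lambda>i j. 0) i j)"
    by (rule mlinearD[OF lin])
  then show ?case by simp
next
  case (insert x F)
  have "\<Theta> (\<lambda>i j. c x * x i j + 1 * (\<Sum>m\<in>F. c m * m i j)) = (\<lambda>i j. c x * \<Theta> x i j + 1 * \<Theta> (\<lambda>i j. \<Sum>m\<in>F. c m * m i j) i j)"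
    by (rule mlinearD[OF lin])
  then show ?case using insert by simp
qed

lemma mspanE:
  assumes "x \<in> mspan S"
  obtains F c where "finite F" "F \<subseteq> S" "x = (\<lambda>i j. \<Sum>m\<in>F. c m * m i j)"
  using assms unfolding mspan_def by blast

lemma map_closure:
  assumes lin: "mlinear \<Theta>" and est: "\<And>T M. norm_bound T M \<Longrightarrow> norm_bound (\<Theta> T) (K * M)"
    and Sb: "S \<subseteq> Collect bounded_mat" and Wb: "W \<subseteq> Collect bounded_mat"
    and img: "\<And>m. m \<in> S \<Longrightarrow> \<Theta> m \<in> mclosure (mspan W)"
    and T: "T \<in> mclosure (mspan S)"
  shows "\<Theta> T \<in> mclosure (mspan W)"
proof -
  have spanimg: "\<Theta> x \<in> mclosure (mspan W)" if xs: "x \<in> mspan S" for x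
  proof -
    obtain F c where F: "finite F" "F \<subseteq> S" "x = (\<lambda>i j. \<Sum>m\<in>F. c m * m i j)"
      using xs by (rule mspanE)
    show ?thesis unfolding F(3) mlinear_sum[OF lin F(1)]
      using F img by (intro mclosure_sum[OF Wb]) auto
  qed
  obtain s where s: "\<forall>n. s n \<in> mspan S" "(\<lambda>n. opnorm (mdiff (s n) T)) \<longlonglongrightarrow> 0"
    using T by (rule mclosureE)
  have Tb: "bounded_mat T" using T mclosure_bounded by blast
  have sb: "bounded_mat (s n)" for n using s mspan_bounded[OF Sb] by blast
  have dlin: "mdiff (\<Theta> (s n)) (\<Theta> T) = \<Theta> (mdiff (s n) T)" for n
  proof -
    have "\<Theta> (\<lambda>i j. 1 * s n i j + (-1) * T i j) = (\<lambda>i j. 1 * \<Theta> (s n) i j + (-1) * \<Theta> T i j)"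
      by (rule mlinearD[OF lin])
    then show ?thesis unfolding mdiff_def by simp
  qed
  have le: "opnorm (mdiff (\<Theta> (s n)) (\<Theta> T)) \<le> K * opnorm (mdiff (s n) T)" for n
    unfolding dlin by (rule opnorm_le, rule est, rule opnorm_nb, rule mdiff_bounded[OF sb Tb])
  have ge: "0 \<le> opnorm (mdiff (\<Theta> (s n)) (\<Theta> T))" for n
  proof -
    have "norm_bound (\<Theta> (mdiff (s n) T)) (K * opnorm (mdiff (s n) T))"
      by (rule est, rule opnorm_nb, rule mdiff_bounded[OF sb Tb])
    then show ?thesis unfolding dlin by (intro opnorm_nonneg) (auto simp: bounded_mat_def)
  qed
  have "(\<lambda>n. K * opnorm (mdiff (s n) T)) \<longlonglongrightarrow> K * 0"
    by (intro tendsto_mult tendsto_const s(2))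
  then have h: "(\<lambda>n. K * opnorm (mdiff (s n) T)) \<longlonglongrightarrow> 0" by simp
  have "(\<lambda>n. opnorm (mdiff (\<Theta> (s n)) (\<Theta> T))) \<longlonglongrightarrow> 0"
    by (rule tendsto_sandwich[OF always_eventually always_eventually tendsto_const h])
       (intro allI ge le)+
  moreover have "bounded_mat (\<Theta> T)"
  proof -
    have "norm_bound (\<Theta> T) (K * opnorm T)" by (rule est, rule opnorm_nb[OF Tb])
    then show ?thesis by (auto simp: bounded_mat_def)
  qed
  moreover have "\<forall>n. \<Theta> (s n) \<in> mclosure (mspan W)" using spanimg s(1) by blast
  ultimately show ?thesis
    by (intro mclosure_closed[where s="\<lambda>n. \<Theta> (s n)"]) (auto intro: mspan_bounded[OF Wb])
qed

lemma entry_zero: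
  assumes Sb: "S \<subseteq> Collect bounded_mat" and z: "\<And>m. m \<in> S \<Longrightarrow> m i j = 0"
    and T: "T \<in> mclosure (mspan S)"
  shows "T i j = 0"
proof -
  have spz: "x i j = 0" if xs: "x \<in> mspan S" for x
  proof -
    obtain F c where F: "finite F" "F \<subseteq> S" "x = (\<lambda>i j. \<Sum>m\<in>F. c m * m i j)"
      using xs by (rule mspanE)
    have "\<forall>m\<in>F. c m * m i j = 0"
    proof
      fix m assume "m \<in> F"
      then have "m \<in> S" using F(2) by blast
      then have "m i j = 0" by (rule z)
      then show "c m * m i j = 0" by simp
    qed
    then show ?thesis unfolding F(3) by (simp add: sum.neutral)
  qed
  obtain s where s: "\<forall>n. s n \<in> mspan S" "(\<lambda>n. opnorm (mdiff (s n) T)) \<longlonglongrightarrow> 0"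
    using T by (rule mclosureE)
  have Tb: "bounded_mat T" using T mclosure_bounded by blast
  have sb: "bounded_mat (s n)" for n using s mspan_bounded[OF Sb] by blast
  have bnd: "cmod (T i j) \<le> opnorm (mdiff (s n) T)" for n
  proof -
    have "cmod (mdiff (s n) T i j) \<le> opnorm (mdiff (s n) T)"
      by (rule nb_entry, rule opnorm_nb, rule mdiff_bounded[OF sb Tb])
    moreover have "s n i j = 0" using spz s(1) by blast
    ultimately show ?thesis unfolding mdiff_def by simp
  qed
  have "cmod (T i j) \<le> 0"
    by (rule LIMSEQ_le_const[OF s(2)]) (use bnd in blast)
  then show ?thesis by simp
qed

definition RA :: "('p \<Rightarrow> bool) \<Rightarrow> ('p \<Rightarrow> bool) \<Rightarrow> ('p \<Rightarrow> 'i \<times> 'k) \<Rightarrow> ('p \<Rightarrow> 'i \<times> 'k) \<Rightarrow> 'i mat \<Rightarrow> 'p mat" where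
  "RA Dp Dq \<sigma> \<tau> T = reidx Dp Dq \<sigma> \<tau> (ampl T)"

definition tri :: "('a \<Rightarrow> 'p mat) \<Rightarrow> ('a \<Rightarrow> 'p mat) \<Rightarrow> ('a \<Rightarrow> 'p mat) \<Rightarrow> 'a \<Rightarrow> 'p mat" where
  "tri A B C T = (\<lambda>p q. A T p q + B T p q - C T p q)"

lemma RA_eq: "RA Dp Dq \<sigma> \<tau> T p q = (if Dp p \<and> Dq q \<and> snd (\<sigma> p) = snd (\<tau> q) then T (fst (\<sigma> p)) (fst (\<tau> q)) else 0)"
  unfolding RA_def reidx_def ampl_def by (auto split: prod.splits)

lemma nb_RA:
  assumes "inj_on \<sigma> {p. Dp p}" "inj_on \<tau> {q. Dq q}" "norm_bound T M"
  shows "norm_bound (RA Dp Dq \<sigma> \<tau> T) M"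
  unfolding RA_def by (rule nb_reidx[OF assms(1,2) nb_ampl[OF assms(3)]])

lemma amp_RA:
  "amp n (\<lambda>k l. RA Dp Dq \<sigma> \<tau> (x k l)) =
   RA (\<lambda>(p,k). Dp p) (\<lambda>(q,l). Dq q) (\<lambda>(p,k). ((fst (\<sigma> p), k), snd (\<sigma> p))) (\<lambda>(q,l). ((fst (\<tau> q), l), snd (\<tau> q))) (amp n x)"
  by (intro ext) (auto simp: RA_eq amp_def split: prod.splits)

lemma inj_lift:
  assumes "inj_on \<sigma> {p. Dp p}"
  shows "inj_on (\<lambda>(p,k). ((fst (\<sigma> p), k), snd (\<sigma> p))) {pk. (\<lambda>(p,k). Dp p) pk}"
  using assms unfolding inj_on_def by (auto simp: prod_eq_iff)

lemma mlinear_RA: "mlinear (RA Dp Dq \<sigma> \<tau>)"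
  unfolding mlinear_def by (auto simp: RA_eq fun_eq_iff)

lemma mlinear_tri:
  assumes "mlinear A" "mlinear B" "mlinear C"
  shows "mlinear (tri A B C)"
  using assms unfolding mlinear_def tri_def by (auto simp: fun_eq_iff algebra_simps)

lemma nb_tri:
  assumes "norm_bound (A T) M" "norm_bound (B T) M" "norm_bound (C T) M"
  shows "norm_bound (tri A B C T) (3 * M)"
proof -
  have "norm_bound (\<lambda>p q. (\<lambda>p q. A T p q + B T p q) p q + (\<lambda>p q. (- 1) * C T p q) p q) ((M + M) + cmod (-1) * M)"
    by (rule nb_add[OF nb_add[OF assms(1,2)] nb_scale[OF assms(3)]])
  moreover have "(\<lambda>p q. (\<lambda>p q. A T p q + B T p q) p q + (\<lambda>p q. (- 1) * C T p q) p q) = tri A B C T"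
    unfolding tri_def by auto
  moreover have "(M + M) + cmod (-1) * M = 3 * M" by simp
  ultimately show ?thesis by simp
qed

lemma amp_tri:
  "amp n (\<lambda>k l. tri A B C (x k l)) = tri (\<lambda>y. amp n (\<lambda>k l. A (y k l))) (\<lambda>y. amp n (\<lambda>k l. B (y k l))) (\<lambda>y. amp n (\<lambda>k l. C (y k l))) x"
  by (intro ext) (auto simp: tri_def amp_def split: prod.splits)

lemma amp_bounded:
  assumes "\<And>k l. k < n \<Longrightarrow> l < n \<Longrightarrow> bounded_mat (x k l)"
  shows "bounded_mat (amp n x)"
proof -
  define E where "E m = reidx (\<lambda>(i,k'). k' = fst m) (\<lambda>(j,l'). l' = snd m) fst fst (x (fst m) (snd m))" for m
  have "amp n x = (\<lambda>P Q. \<Sum>m\<in>{..<n} \<times> {..<n}. E m P Q)"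
  proof (intro ext)
    fix P Q :: "'a \<times> nat"
    obtain i k' where P: "P = (i,k')" by (cases P)
    obtain j l' where Q: "Q = (j,l')" by (cases Q)
    have "(\<Sum>m\<in>{..<n} \<times> {..<n}. E m P Q) = (\<Sum>m\<in>{..<n} \<times> {..<n}. if m = (k',l') then x k' l' i j else 0)"
      unfolding P Q E_def reidx_def by (intro sum.cong) (auto simp: prod_eq_iff)
    also have "\<dots> = (if k' < n \<and> l' < n then x k' l' i j else 0)"
      by (simp add: sum.delta')
    finally show "amp n x P Q = (\<Sum>m\<in>{..<n} \<times> {..<n}. E m P Q)"
      unfolding P Q amp_def by simp
  qed
  moreover have "bounded_mat (\<lambda>P Q. \<Sum>m\<in>{..<n} \<times> {..<n}. E m P Q)"
  proof (rule bounded_sum)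
    show "\<forall>m\<in>{..<n} \<times> {..<n}. bounded_mat (E m)"
    proof
      fix m assume m: "m \<in> {..<n} \<times> {..<n}"
      have "bounded_mat (x (fst m) (snd m))" using assms[of "fst m" "snd m"] m by (auto simp: mem_Times_iff)
      then obtain M where M: "norm_bound (x (fst m) (snd m)) M"
        unfolding bounded_mat_def by blast
      have "norm_bound (E m) M" unfolding E_def
        by (rule nb_reidx[OF _ _ M]) (auto simp: inj_on_def)
      then show "bounded_mat (E m)" unfolding bounded_mat_def by blast
    qed
  qed simp
  ultimately show ?thesis by simp
qed

lemma cb_tri:
  assumes i1: "inj_on \<sigma>1 {p. D1 p}" "inj_on \<tau>1 {q. E1 q}"
      and i2: "inj_on \<sigma>2 {p. D2 p}" "inj_on \<tau>2 {q. E2 q}"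
      and i3: "inj_on \<sigma>3 {p. D3 p}" "inj_on \<tau>3 {q. E3 q}"
      and xb: "\<And>k l. k < n \<Longrightarrow> l < n \<Longrightarrow> bounded_mat (x k l)"
  shows "opnorm (amp n (\<lambda>k l. tri (RA D1 E1 \<sigma>1 \<tau>1) (RA D2 E2 \<sigma>2 \<tau>2) (RA D3 E3 \<sigma>3 \<tau>3) (x k l)))
         \<le> 3 * opnorm (amp n x)"
proof -
  have ab: "bounded_mat (amp n x)" by (rule amp_bounded[OF xb])
  have nb: "norm_bound (amp n x) (opnorm (amp n x))" by (rule opnorm_nb[OF ab])
  show ?thesis
    unfolding amp_tri amp_RA
    by (rule opnorm_le, rule nb_tri; rule nb_RA[OF inj_lift inj_lift nb]; fact)
qed

fun rho :: "nat \<times> nat list \<Rightarrow> nat list" where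
  "rho (0, []) = []"
| "rho (0, j # w) = (2 * j) # w"
| "rho (Suc j, w) = (2 * j + 1) # w"

fun rhoinv :: "nat list \<Rightarrow> nat \<times> nat list" where
  "rhoinv [] = (0, [])"
| "rhoinv (h # r) = (if even h then (0, (h div 2) # r) else (Suc (h div 2), r))"

lemma rhoinv_rho[simp]: "rhoinv (rho p) = p"
  by (induction p rule: rho.induct) auto

lemma rho_rhoinv[simp]: "rho (rhoinv x) = x"
proof (cases x)
  case Nil then show ?thesis by simp
next
  case (Cons h r)
  then show ?thesis
  proof (cases "even h")
    case True then show ?thesis using Cons by (auto elim!: evenE)
  next
    case False then show ?thesis using Cons by (auto elim!: oddE)
  qed
qed

lemma rho_eq_iff: "rho p = x \<longleftrightarrow> p = rhoinv x"
  by (metis rho_rhoinv rhoinv_rho)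

lemma rho_Nil_iff: "rho p = [] \<longleftrightarrow> p = (0, [])"
  by (metis rho_eq_iff rhoinv.simps(1))

lemma rhoinv_append: "x \<noteq> [] \<Longrightarrow> rhoinv (x @ v) = (fst (rhoinv x), snd (rhoinv x) @ v)"
  by (cases x) auto

lemma rho_append: "(i, y) \<noteq> (0, []) \<Longrightarrow> rho (i, y) @ v = rho (i, y @ v)"
  by (cases "(i, y)" rule: rho.cases) auto

lemma inj_rho: "inj_on rho A"
  by (metis inj_onI rhoinv_rho)

lemma inj_rhoinv: "inj_on rhoinv A"
  by (metis inj_onI rho_rhoinv)

definition Th :: "nat list mat \<Rightarrow> (nat \<times> nat list) mat" where
  "Th = tri (RA (\<lambda>p. rho p \<noteq> []) (\<lambda>q. fst q = 0) (\<lambda>p. (rho p, [] :: nat list)) (\<lambda>q. (snd q, [])))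
            (RA (\<lambda>p. fst p = 0) (\<lambda>q. fst q = 0) (\<lambda>p. ([] :: nat list, snd p)) (\<lambda>q. ([], snd q)))
            (RA (\<lambda>p. rho p \<noteq> []) (\<lambda>q. fst q = 0) (\<lambda>p. ([] :: nat list, rho p)) (\<lambda>q. ([], snd q)))"

definition La :: "(nat \<times> nat list) mat \<Rightarrow> nat list mat" where
  "La = tri (RA (\<lambda>x. x \<noteq> []) (\<lambda>_. True) (\<lambda>x. (rhoinv x, (0::nat, [] :: nat list))) (\<lambda>v. ((0, v), (0, []))))
            (RA (\<lambda>_. True) (\<lambda>_. True) (\<lambda>x. ((0::nat, [] :: nat list), (0::nat, x))) (\<lambda>v. ((0, []), (0, v))))
            (RA (\<lambda>x. x \<noteq> []) (\<lambda>_. True) (\<lambda>x. ((0::nat, [] :: nat list), rhoinv x)) (\<lambda>v. ((0, []), (0, v))))"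

lemma Th_eq: "Th a (i, w) (k, v) =
   (if k = 0 then (if rho (i, w) \<noteq> [] then a (rho (i, w)) v else 0)
      + (if i = 0 \<and> w = v then a [] [] else 0)
      - (if rho (i, w) \<noteq> [] \<and> rho (i, w) = v then a [] [] else 0) else 0)"
  unfolding Th_def tri_def by (simp add: RA_eq)

lemma La_eq: "La t x v =
   (if x \<noteq> [] then t (rhoinv x) (0, v) else 0)
   + (if x = v then t (0, []) (0, []) else 0)
   - (if x \<noteq> [] \<and> rhoinv x = (0, v) then t (0, []) (0, []) else 0)"
  unfolding La_def tri_def by (simp add: RA_eq)

lemma La_Th:
  assumes z: "\<And>v. v \<noteq> [] \<Longrightarrow> a [] v = 0"
  shows "La (Th a) = a"
proof (intro ext)
  fix x v
  have c: "Th a (0, []) (0, []) = a [] []" by (simp add: Th_eq)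
  show "La (Th a) x v = a x v"
  proof (cases "x = []")
    case True
    then show ?thesis using z[of v] by (cases "v = []") (auto simp: La_eq c)
  next
    case False
    obtain i w where iw: "rhoinv x = (i, w)" by (cases "rhoinv x")
    have rx: "rho (i, w) = x" using iw by (metis rho_rhoinv)
    show ?thesis using False unfolding La_eq c iw
      by (auto simp: Th_eq rx)
  qed
qed

lemma Th_La:
  assumes z1: "\<And>p k v. k \<noteq> 0 \<Longrightarrow> t p (k, v) = 0"
      and z2: "\<And>i k v. v \<noteq> [] \<Longrightarrow> t (i, []) (k, v) = 0"
  shows "Th (La t) = t"
proof (intro ext)
  fix p q :: "nat \<times> nat list"
  obtain i w where p: "p = (i, w)" by (cases p)
  obtain k v where q: "q = (k, v)" by (cases q)
  have c: "La t [] [] = t (0, []) (0, [])" by (simp add: La_eq)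
  show "Th (La t) p q = t p q"
  proof (cases "k = 0")
    case False then show ?thesis unfolding p q using z1 by (simp add: Th_eq)
  next
    case k: True
    show ?thesis
    proof (cases "rho (i, w) = []")
      case True
      then have iw: "i = 0" "w = []" using rho_Nil_iff by auto
      then show ?thesis unfolding p q using k z2[of v 0 0] by (cases "v = []") (auto simp: Th_eq c)
    next
      case False
      show ?thesis unfolding p q using k False
        by (auto simp: Th_eq c La_eq rho_Nil_iff)
    qed
  qed
qed

lemma kron_apply: "kron A B p q = A (fst p) (fst q) * B (snd p) (snd q)"
  unfolding kron_def by (simp add: case_prod_beta)

lemma kron_unit: "kron (unit_mat i 0) b = reidx (\<lambda>p. fst p = i) (\<lambda>q. fst q = 0) snd snd b"
  unfolding kron_def unit_mat_def reidx_def by (auto simp: fun_eq_iff)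

lemma Th_Lop: "Th (Lop x) = kron (unit_mat (fst (rhoinv x)) 0) (Lop (snd (rhoinv x)))"
proof (intro ext)
  fix p q :: "nat \<times> nat list"
  obtain i w where p: "p = (i, w)" by (cases p)
  obtain k v where q: "q = (k, v)" by (cases q)
  have c: "Lop x [] [] = (if x = [] then 1 else 0)" by (simp add: Lop_def)
  have r: "kron (unit_mat (fst (rhoinv x)) 0) (Lop (snd (rhoinv x))) (i, w) (k, v)
      = (if k = 0 \<and> i = fst (rhoinv x) \<and> w = snd (rhoinv x) @ v then 1 else 0)"
    by (simp add: kron_def unit_mat_def Lop_def)
  have l: "Lop x (rho (i, w)) v = (if rho (i, w) = x @ v then 1 else 0)" by (simp add: Lop_def)
  show "Th (Lop x) p q = kron (unit_mat (fst (rhoinv x)) 0) (Lop (snd (rhoinv x))) p q"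
  proof (cases "x = []")
    case True
    have "Th (Lop x) (i, w) (k, v) = (if k = 0 \<and> i = 0 \<and> w = v then 1 else 0)"
      unfolding Th_eq c l using True by (cases "rho (i, w) = v") auto
    then show ?thesis unfolding p q r using True by simp
  next
    case False
    have iff: "rho (i, w) = x @ v \<longleftrightarrow> i = fst (rhoinv x) \<and> w = snd (rhoinv x) @ v"
      using rhoinv_append[OF False] rho_eq_iff by (metis prod.inject)
    have ne: "rho (i, w) = x @ v \<Longrightarrow> rho (i, w) \<noteq> []" using False by simp
    have "Th (Lop x) (i, w) (k, v) = (if k = 0 then (if rho (i, w) = x @ v then 1 else 0) else 0)"
      unfolding Th_eq c l using False ne by auto
    then show ?thesis unfolding p q r iff by simp
  qed
qed

lemma kron_unit_Lop: "kron (unit_mat i 0) (Lop y) p (0, v) = (if p = (i, y @ v) then 1 else 0)"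
  by (cases p) (simp add: kron_def unit_mat_def Lop_def)

lemma La_kron_Lop: "La (kron (unit_mat i 0) (Lop y)) = Lop (rho (i, y))"
proof (intro ext)
  fix x v
  have e: "La (kron (unit_mat i 0) (Lop y)) x v =
     (if x \<noteq> [] then (if rhoinv x = (i, y @ v) then 1 else 0) else 0)
   + (if x = v then (if (0, []) = (i, y) then 1 else 0) else 0)
   - (if x \<noteq> [] \<and> rhoinv x = (0, v) then (if (0, []) = (i, y) then 1 else 0) else 0)"
    unfolding La_eq kron_unit_Lop by simp
  show "La (kron (unit_mat i 0) (Lop y)) x v = Lop (rho (i, y)) x v"
  proof (cases "(i, y) = (0, [])")
    case True
    then have iy: "i = 0" "y = []" by auto
    have l: "Lop (rho (i, y)) x v = (if x = v then 1 else 0)" unfolding iy by (simp add: Lop_def)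
    show ?thesis unfolding e l using iy by simp
  next
    case False
    have ne: "rho (i, y @ v) \<noteq> []" using False rho_Nil_iff by auto
    have iff: "x = rho (i, y) @ v \<longleftrightarrow> rhoinv x = (i, y @ v)"
      unfolding rho_append[OF False] using rho_eq_iff by metis
    have iff2: "x \<noteq> [] \<and> rhoinv x = (i, y @ v) \<longleftrightarrow> x = rho (i, y) @ v"
      using iff ne rho_append[OF False] by auto
    have z: "(if (0::nat, []::nat list) = (i, y) then 1 else 0) = (0::complex)" using False by auto
    have A: "(if x \<noteq> [] then (if rhoinv x = (i, y @ v) then 1 else 0) else 0) = (if x = rho (i, y) @ v then (1::complex) else 0)"
      unfolding iff2[symmetric] by simp
    have l: "Lop (rho (i, y)) x v = (if x = rho (i, y) @ v then 1 else 0)" by (simp add: Lop_def)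
    show ?thesis unfolding e l z A by simp
  qed
qed

definition Idm :: "'i mat" where "Idm = (\<lambda>i j. if i = j then 1 else 0)"

lemma nb_Idm: "norm_bound (Idm :: 'i mat) 1"
proof (rule nbI)
  fix S F :: "'i set" and f :: "'i \<Rightarrow> complex" assume fin: "finite S" "finite F"
  have "(\<Sum>i\<in>F. (cmod (\<Sum>j\<in>S. Idm i j * f j))\<^sup>2) = (\<Sum>i\<in>F. if i \<in> S then (cmod (f i))\<^sup>2 else 0)"
  proof (intro sum.cong refl)
    fix i
    have "(\<Sum>j\<in>S. Idm i j * f j) = (\<Sum>j\<in>S. if i = j then f j else 0)"
      by (intro sum.cong) (auto simp: Idm_def)
    also have "\<dots> = (if i \<in> S then f i else 0)" using fin by (simp add: sum.delta)
    finally show "(cmod (\<Sum>j\<in>S. Idm i j * f j))\<^sup>2 = (if i \<in> S then (cmod (f i))\<^sup>2 else 0)" by simp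
  qed
  also have "\<dots> = (\<Sum>i\<in>F \<inter> S. (cmod (f i))\<^sup>2)"
    using fin by (simp add: sum.inter_restrict)
  also have "\<dots> \<le> (\<Sum>i\<in>S. (cmod (f i))\<^sup>2)"
    using fin by (intro sum_mono2) auto
  finally show "(\<Sum>i\<in>F. (cmod (\<Sum>j\<in>S. Idm i j * f j))\<^sup>2) \<le> 1\<^sup>2 * (\<Sum>j\<in>S. (cmod (f j))\<^sup>2)" by simp
qed simp

lemma Lop_reidx: "Lop x = reidx (\<lambda>w. \<exists>v. w = x @ v) (\<lambda>_. True) (drop (length x)) id Idm"
  unfolding Lop_def reidx_def Idm_def by (auto simp: fun_eq_iff)

lemma nb_Lop: "norm_bound (Lop x) 1"
  unfolding Lop_reidx by (rule nb_reidx[OF _ _ nb_Idm]) (auto simp: inj_on_def)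

lemma unit_reidx: "unit_mat a b = reidx (\<lambda>p. p = a) (\<lambda>q. q = b) (\<lambda>_. 0::nat) (\<lambda>_. 0) Idm"
  unfolding unit_mat_def reidx_def Idm_def by (auto simp: fun_eq_iff)

lemma nb_unit: "norm_bound (unit_mat a b) 1"
  unfolding unit_reidx by (rule nb_reidx[OF _ _ nb_Idm]) (auto simp: inj_on_def)

lemma Lops_bounded: "range Lop \<subseteq> Collect bounded_mat"
  using nb_Lop bounded_mat_def by blast

lemma units_bounded: "{unit_mat i 0 | i. True} \<subseteq> Collect bounded_mat"
  using nb_unit bounded_mat_def by blast

lemma A_zero: "b \<in> A_inf \<Longrightarrow> v \<noteq> [] \<Longrightarrow> b [] v = 0"
  unfolding A_inf_def by (rule entry_zero[OF Lops_bounded]) (auto simp: Lop_def)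

lemma col_zero: "a \<in> column_space \<Longrightarrow> k \<noteq> 0 \<Longrightarrow> a i k = 0"
  unfolding column_space_def by (rule entry_zero[OF units_bounded]) (auto simp: unit_mat_def)

definition colpart :: "nat mat \<Rightarrow> nat mat" where
  "colpart a = (\<lambda>i k. if k = 0 then a i 0 else 0)"

lemma colpart_col: "a \<in> column_space \<Longrightarrow> colpart a = a"
  unfolding colpart_def using col_zero by (auto simp: fun_eq_iff)

lemma sum_slice1:
  fixes S :: "('a \<times> 'b) set"
  assumes "finite S"
  shows "(\<Sum>y\<in>S. if fst y = k then G (snd y) else 0) = (\<Sum>v\<in>snd ` S. if (k,v) \<in> S then G v else (0::'c::comm_monoid_add))"
proof -
  have "(\<Sum>v\<in>snd ` S. if (k,v) \<in> S then G v else 0) = (\<Sum>v\<in>{v\<in>snd ` S. (k,v) \<in> S}. G v)"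
    using assms by (simp add: sum.inter_filter)
  also have "\<dots> = (\<Sum>y\<in>(\<lambda>v. (k,v)) ` {v\<in>snd ` S. (k,v) \<in> S}. G (snd y))"
    by (subst sum.reindex) (auto simp: inj_on_def)
  also have "(\<lambda>v. (k,v)) ` {v\<in>snd ` S. (k,v) \<in> S} = {y\<in>S. fst y = k}"
    by (auto simp: image_iff) (metis snd_conv prod.collapse)
  also have "(\<Sum>y\<in>{y\<in>S. fst y = k}. G (snd y)) = (\<Sum>y\<in>S. if fst y = k then G (snd y) else 0)"
    using assms by (simp add: sum.inter_filter)
  finally show ?thesis by simp
qed


lemma nb_kron_col:
  fixes a :: "nat mat" and b :: "'j mat"
  assumes a: "norm_bound a M1" and b: "norm_bound b M2"
  shows "norm_bound (kron (colpart a) b) (M1 * M2)"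
proof (rule nbI)
  show "0 \<le> M1 * M2" using nb_nonneg[OF a] nb_nonneg[OF b] by simp
  fix S F :: "(nat \<times> 'j) set" and f :: "nat \<times> 'j \<Rightarrow> complex" assume fin: "finite S" "finite F"
  define I where "I = fst ` F"
  define Wf where "Wf = snd ` F"
  define V where "V = snd ` S"
  define g where "g v = (if (0, v) \<in> S then f (0, v) else 0)" for v
  define h where "h w = (\<Sum>v\<in>V. b w v * g v)" for w
  have finI: "finite I" "finite Wf" "finite V" using fin unfolding I_def Wf_def V_def by auto
  have inner: "(\<Sum>y\<in>S. kron (colpart a) b (i, w) y * f y) = a i 0 * h w" for i w
  proof -
    have "(\<Sum>y\<in>S. kron (colpart a) b (i, w) y * f y) = (\<Sum>y\<in>S. if fst y = 0 then a i 0 * (b w (snd y) * f (0, snd y)) else 0)"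
      by (intro sum.cong) (auto simp: kron_apply colpart_def)
    also have "\<dots> = (\<Sum>v\<in>V. if (0, v) \<in> S then a i 0 * (b w v * f (0, v)) else 0)"
      unfolding V_def by (rule sum_slice1[OF fin(1)])
    also have "\<dots> = (\<Sum>v\<in>V. a i 0 * (b w v * g v))"
      unfolding g_def by (intro sum.cong) auto
    also have "\<dots> = a i 0 * h w" unfolding h_def by (simp add: sum_distrib_left)
    finally show ?thesis .
  qed
  have A: "(\<Sum>i\<in>I. (cmod (a i 0))\<^sup>2) \<le> M1\<^sup>2"
  proof -
    have "(\<Sum>i\<in>I. (cmod (\<Sum>j\<in>{0}. a i j * 1))\<^sup>2) \<le> M1\<^sup>2 * (\<Sum>j\<in>{0::nat}. (cmod (1::complex))\<^sup>2)"
      by (rule nbD[OF a]) (use finI in auto)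
    then show ?thesis by simp
  qed
  have B: "(\<Sum>w\<in>Wf. (cmod (h w))\<^sup>2) \<le> M2\<^sup>2 * (\<Sum>v\<in>V. (cmod (g v))\<^sup>2)"
    unfolding h_def by (rule nbD[OF b]) (use finI in auto)
  have C: "(\<Sum>v\<in>V. (cmod (g v))\<^sup>2) \<le> (\<Sum>y\<in>S. (cmod (f y))\<^sup>2)"
  proof -
    have "(\<Sum>v\<in>V. (cmod (g v))\<^sup>2) = (\<Sum>v\<in>V. if (0, v) \<in> S then (cmod (f (0, v)))\<^sup>2 else 0)"
      unfolding g_def by (intro sum.cong) auto
    also have "\<dots> = (\<Sum>y\<in>S. if fst y = 0 then (cmod (f (0, snd y)))\<^sup>2 else 0)"
      unfolding V_def by (rule sum_slice1[OF fin(1), symmetric])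
    also have "\<dots> \<le> (\<Sum>y\<in>S. (cmod (f y))\<^sup>2)"
      by (intro sum_mono) (auto simp: prod_eq_iff)
    finally show ?thesis .
  qed
  have "(\<Sum>x\<in>F. (cmod (\<Sum>y\<in>S. kron (colpart a) b x y * f y))\<^sup>2) = (\<Sum>(i, w)\<in>F. (cmod (a i 0))\<^sup>2 * (cmod (h w))\<^sup>2)"
    using inner by (intro sum.cong) (auto simp: norm_mult power_mult_distrib)
  also have "\<dots> \<le> (\<Sum>(i, w)\<in>I \<times> Wf. (cmod (a i 0))\<^sup>2 * (cmod (h w))\<^sup>2)"
  proof (rule sum_mono2)
    show "F \<subseteq> I \<times> Wf" unfolding I_def Wf_def by (auto simp: mem_Times_iff intro: rev_image_eqI)
  qed (use finI in auto)
  also have "\<dots> = (\<Sum>i\<in>I. (cmod (a i 0))\<^sup>2) * (\<Sum>w\<in>Wf. (cmod (h w))\<^sup>2)"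
    by (simp add: sum_product sum.cartesian_product)
  also have "\<dots> \<le> M1\<^sup>2 * (M2\<^sup>2 * (\<Sum>y\<in>S. (cmod (f y))\<^sup>2))"
  proof (rule mult_mono[OF A])
    show "(\<Sum>w\<in>Wf. (cmod (h w))\<^sup>2) \<le> M2\<^sup>2 * (\<Sum>y\<in>S. (cmod (f y))\<^sup>2)"
      using B C by (meson mult_left_mono order.trans zero_le_power2)
  qed (auto intro: sum_nonneg)
  finally show "(\<Sum>x\<in>F. (cmod (\<Sum>y\<in>S. kron (colpart a) b x y * f y))\<^sup>2) \<le> (M1 * M2)\<^sup>2 * (\<Sum>y\<in>S. (cmod (f y))\<^sup>2)"
    by (simp add: power_mult_distrib mult.assoc)
qed

definition Kset :: "(nat \<times> nat list) mat set" where
  "Kset = {kron a b | a b. a \<in> column_space \<and> b \<in> A_inf}"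

lemma Y_def': "spatial_tensor column_space A_inf = mclosure (mspan Kset)"
  unfolding spatial_tensor_def Kset_def by simp

lemma Kset_bounded: "Kset \<subseteq> Collect bounded_mat"
proof
  fix m assume "m \<in> Kset"
  then obtain a b where m: "m = kron a b" "a \<in> column_space" "b \<in> A_inf" unfolding Kset_def by blast
  have "bounded_mat a" using m(2) unfolding column_space_def by (rule mclosure_bounded)
  then obtain M1 where M1: "norm_bound a M1" unfolding bounded_mat_def by blast
  have "bounded_mat b" using m(3) unfolding A_inf_def by (rule mclosure_bounded)
  then obtain M2 where M2: "norm_bound b M2" unfolding bounded_mat_def by blast
  have "m = kron (colpart a) b" using m colpart_col by simp
  then show "m \<in> Collect bounded_mat" using nb_kron_col[OF M1 M2] bounded_mat_def by auto
qed

lemma Y_zero1: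
  assumes "t \<in> spatial_tensor column_space A_inf" "k \<noteq> 0"
  shows "t p (k, v) = 0"
  using assms(1) unfolding Y_def'
proof (rule entry_zero[OF Kset_bounded, rotated])
  fix m assume "m \<in> Kset"
  then obtain a b where m: "m = kron a b" "a \<in> column_space" "b \<in> A_inf" unfolding Kset_def by blast
  show "m p (k, v) = 0" unfolding m(1) kron_apply using col_zero[OF m(2) assms(2)] by simp
qed

lemma Y_zero2:
  assumes "t \<in> spatial_tensor column_space A_inf" "v \<noteq> []"
  shows "t (i, []) (k, v) = 0"
  using assms(1) unfolding Y_def'
proof (rule entry_zero[OF Kset_bounded, rotated])
  fix m assume "m \<in> Kset"
  then obtain a b where m: "m = kron a b" "a \<in> column_space" "b \<in> A_inf" unfolding Kset_def by blast
  show "m (i, []) (k, v) = 0" unfolding m(1) kron_apply using A_zero[OF m(3) assms(2)] by simp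
qed

lemma inj_Th1: "inj_on (\<lambda>p. (rho p, [] :: nat list)) {p. rho p \<noteq> []}"
  by (rule inj_onI) (metis prod.inject rhoinv_rho)
lemma inj_Th2: "inj_on (\<lambda>q::nat \<times> nat list. (snd q, [] :: nat list)) {q. fst q = 0}"
  by (rule inj_onI) (auto simp: prod_eq_iff)
lemma inj_Th3: "inj_on (\<lambda>p::nat \<times> nat list. ([] :: nat list, snd p)) {p. fst p = 0}"
  by (rule inj_onI) (auto simp: prod_eq_iff)
lemma inj_Th4: "inj_on (\<lambda>q::nat \<times> nat list. ([] :: nat list, snd q)) {q. fst q = 0}"
  by (rule inj_onI) (auto simp: prod_eq_iff)
lemma inj_Th5: "inj_on (\<lambda>p. ([] :: nat list, rho p)) {p. rho p \<noteq> []}"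
  by (rule inj_onI) (metis prod.inject rhoinv_rho)

lemma inj_La1: "inj_on (\<lambda>x. (rhoinv x, (0::nat, [] :: nat list))) {x. x \<noteq> []}"
  by (rule inj_onI) (metis prod.inject rho_rhoinv)
lemma inj_La2: "inj_on (\<lambda>v::nat list. ((0::nat, v), (0::nat, [] :: nat list))) {q. True}"
  by (rule inj_onI) auto
lemma inj_La3: "inj_on (\<lambda>x::nat list. ((0::nat, [] :: nat list), (0::nat, x))) {q. True}"
  by (rule inj_onI) auto
lemma inj_La4: "inj_on (\<lambda>x. ((0::nat, [] :: nat list), rhoinv x)) {x. x \<noteq> []}"
  by (rule inj_onI) (metis prod.inject rho_rhoinv)

lemma mlinear_Th: "mlinear Th"
  unfolding Th_def by (intro mlinear_tri mlinear_RA)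

lemma mlinear_La: "mlinear La"
  unfolding La_def by (intro mlinear_tri mlinear_RA)

lemma nb_Th: "norm_bound T M \<Longrightarrow> norm_bound (Th T) (3 * M)"
  unfolding Th_def
  by (intro nb_tri nb_RA inj_Th1 inj_Th2 inj_Th3 inj_Th4 inj_Th5)

lemma nb_La: "norm_bound T M \<Longrightarrow> norm_bound (La T) (3 * M)"
  unfolding La_def
  by (intro nb_tri nb_RA inj_La1 inj_La2 inj_La3 inj_La4)

lemma cb_Th:
  assumes "\<And>k l. k < n \<Longrightarrow> l < n \<Longrightarrow> bounded_mat (x k l)"
  shows "opnorm (amp n (\<lambda>k l. Th (x k l))) \<le> 3 * opnorm (amp n x)"
  unfolding Th_def
  by (rule cb_tri[OF inj_Th1 inj_Th2 inj_Th3 inj_Th4 inj_Th5 inj_Th4 assms])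

lemma cb_La:
  assumes "\<And>k l. k < n \<Longrightarrow> l < n \<Longrightarrow> bounded_mat (x k l)"
  shows "opnorm (amp n (\<lambda>k l. La (x k l))) \<le> 3 * opnorm (amp n x)"
  unfolding La_def
  by (rule cb_tri[OF inj_La1 inj_La2 inj_La3 inj_La3 inj_La4 inj_La3 assms])

lemma mlinear_comp: "mlinear F \<Longrightarrow> mlinear G \<Longrightarrow> mlinear (\<lambda>x. F (G x))"
  unfolding mlinear_def by simp

lemma mlinear_kron2: "mlinear (\<lambda>b. kron a b)"
  unfolding mlinear_def kron_def by (auto simp: fun_eq_iff algebra_simps)

lemma mlinear_kron_col: "mlinear (\<lambda>a. kron (colpart a) b)"
  unfolding mlinear_def kron_def colpart_def by (auto simp: fun_eq_iff algebra_simps)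

lemma unit_in_col: "unit_mat i 0 \<in> column_space"
  unfolding column_space_def by (rule mclosure_span_mem[OF units_bounded]) auto

lemma Lop_in_A: "Lop x \<in> A_inf"
  unfolding A_inf_def by (rule mclosure_span_mem[OF Lops_bounded]) auto

lemma Th_maps:
  assumes a: "a \<in> A_inf" shows "Th a \<in> spatial_tensor column_space A_inf"
  unfolding Y_def'
proof (rule map_closure[OF mlinear_Th nb_Th Lops_bounded Kset_bounded])
  show "a \<in> mclosure (mspan (range Lop))" using a unfolding A_inf_def .
  fix m assume "m \<in> range Lop"
  then obtain x where m: "m = Lop x" by blast
  have "Th m \<in> Kset" unfolding m Th_Lop Kset_def using unit_in_col Lop_in_A by blast
  then show "Th m \<in> mclosure (mspan Kset)" by (rule mclosure_span_mem[OF Kset_bounded])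
qed

lemma La_unit:
  assumes b: "b \<in> A_inf" shows "La (kron (unit_mat i 0) b) \<in> A_inf"
  unfolding A_inf_def
proof (rule map_closure[where \<Theta>="\<lambda>b. La (kron (unit_mat i 0) b)" and K=3, OF mlinear_comp[OF mlinear_La mlinear_kron2] _ Lops_bounded Lops_bounded])
  show "b \<in> mclosure (mspan (range Lop))" using b unfolding A_inf_def .
  fix T :: "nat list mat" and M assume "norm_bound T M"
  then have "norm_bound (kron (unit_mat i 0) T) M"
    unfolding kron_unit by (rule nb_reidx[rotated 2]) (auto simp: inj_on_def prod_eq_iff)
  then show "norm_bound (La (kron (unit_mat i 0) T)) (3 * M)" by (rule nb_La)
next
  fix m assume "m \<in> range Lop"
  then obtain y where m: "m = Lop y" by blast
  show "La (kron (unit_mat i 0) m) \<in> mclosure (mspan (range Lop))"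
    unfolding m La_kron_Lop by (rule mclosure_span_mem[OF Lops_bounded]) auto
qed

lemma La_kron:
  assumes a: "a \<in> column_space" and b: "b \<in> A_inf"
  shows "La (kron a b) \<in> A_inf"
proof -
  have bb: "bounded_mat b" using b unfolding A_inf_def by (rule mclosure_bounded)
  have "La (kron (colpart a) b) \<in> mclosure (mspan (range Lop))"
  proof (rule map_closure[where \<Theta>="\<lambda>a. La (kron (colpart a) b)" and K="3 * opnorm b",
        OF mlinear_comp[OF mlinear_La mlinear_kron_col] _ units_bounded Lops_bounded])
    show "a \<in> mclosure (mspan {unit_mat i 0 | i. True})" using a unfolding column_space_def .
    fix T :: "nat mat" and M assume "norm_bound T M"
    then have "norm_bound (La (kron (colpart T) b)) (3 * (M * opnorm b))"
      by (intro nb_La nb_kron_col opnorm_nb bb)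
    moreover have "3 * (M * opnorm b) = 3 * opnorm b * M" by simp
    ultimately show "norm_bound (La (kron (colpart T) b)) (3 * opnorm b * M)" by simp
  next
    fix m assume "m \<in> {unit_mat i 0 | i. True}"
    then obtain i where m: "m = unit_mat i 0" by blast
    have "colpart m = unit_mat i 0" unfolding m colpart_def unit_mat_def by (auto simp: fun_eq_iff)
    then show "La (kron (colpart m) b) \<in> mclosure (mspan (range Lop))"
      using La_unit[OF b, of i] unfolding A_inf_def by simp
  qed
  then show ?thesis using colpart_col[OF a] unfolding A_inf_def by simp
qed

lemma La_maps:
  assumes t: "t \<in> spatial_tensor column_space A_inf" shows "La t \<in> A_inf"
  unfolding A_inf_def
proof (rule map_closure[OF mlinear_La nb_La Kset_bounded Lops_bounded])
  show "t \<in> mclosure (mspan Kset)" using t unfolding Y_def' .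
  fix m assume "m \<in> Kset"
  then obtain a b where m: "m = kron a b" "a \<in> column_space" "b \<in> A_inf" unfolding Kset_def by blast
  show "La m \<in> mclosure (mspan (range Lop))" using La_kron[OF m(2,3)] unfolding m(1) A_inf_def .
qed

lemma Th_La_Y: "t \<in> spatial_tensor column_space A_inf \<Longrightarrow> Th (La t) = t"
  by (rule Th_La) (auto intro: Y_zero1 Y_zero2)

lemma La_Th_A: "a \<in> A_inf \<Longrightarrow> La (Th a) = a"
  by (rule La_Th) (auto intro: A_zero)

lemma amp_cong: "(\<And>k l. k < n \<Longrightarrow> l < n \<Longrightarrow> x k l = y k l) \<Longrightarrow> amp n x = amp n y"
  unfolding amp_def by (auto simp: fun_eq_iff)

theorem proposition14:
  shows "completely_isomorphic A_inf (spatial_tensor column_space A_inf)"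
proof -
  let ?Y = "spatial_tensor column_space A_inf"
  have inj: "inj_on Th A_inf"
    by (rule inj_onI) (metis La_Th_A)
  have img: "Th ` A_inf = ?Y"
  proof
    show "Th ` A_inf \<subseteq> ?Y" using Th_maps by blast
    show "?Y \<subseteq> Th ` A_inf"
    proof
      fix t assume t: "t \<in> ?Y"
      then have "t = Th (La t)" using Th_La_Y by simp
      then show "t \<in> Th ` A_inf" using La_maps[OF t] by blast
    qed
  qed
  have bij: "bij_betw Th A_inf ?Y" unfolding bij_betw_def using inj img by blast
  have lin: "complex_linear_on Th A_inf"
    unfolding complex_linear_on_def using mlinear_Th unfolding mlinear_def by blast
  have cb1: "completely_bounded Th A_inf"
    unfolding completely_bounded_def
  proof (intro exI allI impI)
    fix n :: nat and x assume x: "\<forall>k l. k < n \<longrightarrow> l < n \<longrightarrow> x k l \<in> A_inf"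
    show "opnorm (amp n (\<lambda>k l. Th (x k l))) \<le> 3 * opnorm (amp n x)"
      by (rule cb_Th) (use x in \<open>auto simp: A_inf_def intro: mclosure_bounded\<close>)
  qed
  have invY: "inv_into A_inf Th t = La t" if "t \<in> ?Y" for t
  proof (rule inv_into_f_eq[OF inj])
    show "La t \<in> A_inf" using La_maps[OF that] .
    show "Th (La t) = t" using Th_La_Y[OF that] .
  qed
  have cb2: "completely_bounded (inv_into A_inf Th) ?Y"
    unfolding completely_bounded_def
  proof (intro exI allI impI)
    fix n :: nat and x assume x: "\<forall>k l. k < n \<longrightarrow> l < n \<longrightarrow> x k l \<in> ?Y"
    have e: "amp n (\<lambda>k l. inv_into A_inf Th (x k l)) = amp n (\<lambda>k l. La (x k l))"
      by (rule amp_cong) (use x invY in auto)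
    have "opnorm (amp n (\<lambda>k l. La (x k l))) \<le> 3 * opnorm (amp n x)"
      by (rule cb_La) (use x in \<open>auto simp: Y_def' intro: mclosure_bounded\<close>)
    then show "opnorm (amp n (\<lambda>k l. inv_into A_inf Th (x k l))) \<le> 3 * opnorm (amp n x)" unfolding e .
  qed
  show ?thesis unfolding completely_isomorphic_def using bij lin cb1 cb2 by blast
qed


end
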